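(* Let $\mathbf C$ satisfy (C1)–(C4) as in the context. Then $\mathcal M_1^{\mathcal X,\mathcal T}(\mathbf C)$ is non-empty. Further, the market comprising the stock, the bond and the call options (trading at the prices $\mathbf C$) is arbitrage free.
   Context: Fix integers $N\ge1$, $J\ge1$, times $0=t_0<t_1<\dots<t_N=T$, $\mathcal T=\{t_1,\dots,t_N\}$, an initial discounted stock price $s_0>0$, strikes $0<x_1<\dots<x_J$, $x_0=0$, $\mathcal X=\{x_0,\dots,x_J\}$. Interest rates are zero after discounting. $\mathbf C=(c_{j,n})_{0\le j\le J,1\le n\le N}$, with $c_{0,n}=s_0$, is the matrix of prices of the calls paying $(X_{t_n}-x_j)^+$ at $t_n$, and satisfies: (C1) $s_0=c_{0,n}\ge c_{1,n}\ge\dots\ge c_{J,n}\ge0$; (C2) $1\ge\frac{c_{0,n}-c_{1,n}}{x_1}\ge\frac{c_{1,n}-c_{2,n}}{x_2-x_1}\ge\dots\ge\frac{c_{J-1,n}-c_{J,n}}{x_J-x_{J-1}}$; (C3) $c_{j,n+1}\ge c_{j,n}$ for $1\le n\le N-1$; (C4) $c_{J,N}=0$. Set $p_{0,n}=1-\frac{s_0-c_{1,n}}{x_1}$, $p_{j,n}=\frac{c_{j-1,n}-c_{j,n}}{x_j-x_{j-1}}-\frac{c_{j,n}-c_{j+1,n}}{x_{j+1}-x_j}$ ($1\le j<J$), $p_{J,n}=\frac{c_{J-1,n}-c_{J,n}}{x_J-x_{J-1}}$. $\mathcal M^{\mathcal X,\mathcal T}(\mathbf C)$ is the set of models: a filtered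 probability space $(\mathcal F_{t_n})_{0\le n\le N}$ with an adapted martingale $(X_{t_n})_{0\le n\le N}$, $X_{t_0}=s_0$, $X_{t_n}\in\mathcal X$ and $\mathbb P(X_{t_n}=x_j)=p_{j,n}$ for $n\ge1$ (equivalently $\mathbb E[(X_{t_n}-x_j)^+]=c_{j,n}$). $\mathcal M_1^{\mathcal X,\mathcal T}(\mathbf C)$ is the subset of those models in which $X$ is Markov: $\mathbb P(X_{t_{n+1}}=x_k\mid\mathcal F_{t_n})=\mathbb P(X_{t_{n+1}}=x_k\mid X_{t_n})$. *)

theory Defs
  imports "HOL-Probability.Probability"
begin

text \<open>Strikes: x 0 = 0 < x 1 < ... < x J. Call prices: c j n for 0 <= j <= J, 1 <= n <= N.\<close>

definition conds_C :: "nat \<Rightarrow> nat \<Rightarrow> real \<Rightarrow> (nat \<Rightarrow> real) \<Rightarrow> (nat \<Rightarrow> nat \<Rightarrow> real) \<Rightarrow> bool" where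
  "conds_C N J s0 x c \<longleftrightarrow>
     \<comment> \<open>c_{0,n} = s0\<close>
     (\<forall>n\<in>{1..N}. c 0 n = s0) \<and>
     \<comment> \<open>(C1)\<close>
     (\<forall>n\<in>{1..N}. (\<forall>j<J. c j n \<ge> c (j+1) n) \<and> c J n \<ge> 0) \<and>
     \<comment> \<open>(C2)\<close>
     (\<forall>n\<in>{1..N}. 1 \<ge> (c 0 n - c 1 n) / x 1 \<and>
        (\<forall>j. 1 \<le> j \<and> j < J \<longrightarrow>
           (c (j-1) n - c j n) / (x j - x (j-1)) \<ge> (c j n - c (j+1) n) / (x (j+1) - x j))) \<and>
     \<comment> \<open>(C3)\<close>
     (\<forall>n. 1 \<le> n \<and> n < N \<longrightarrow> (\<forall>j\<le>J. c j (n+1) \<ge> c j n)) \<and>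
     \<comment> \<open>(C4)\<close>
     c J N = 0"

definition pmarg :: "nat \<Rightarrow> (nat \<Rightarrow> real) \<Rightarrow> (nat \<Rightarrow> nat \<Rightarrow> real) \<Rightarrow> nat \<Rightarrow> nat \<Rightarrow> real" where
  "pmarg J x c j n =
     (if j = 0 then 1 - (c 0 n - c 1 n) / x 1
      else if j < J then (c (j-1) n - c j n) / (x j - x (j-1)) - (c j n - c (j+1) n) / (x (j+1) - x j)
      else (c (J-1) n - c J n) / (x J - x (J-1)))"

text \<open>A model in M^{X,T}(C): probability space M, filtration (F n)_{0<=n<=N} (F n corresponds
  to F_{t_n}), adapted martingale (X n)_{0<=n<=N} (X n corresponds to X_{t_n}).\<close>
definition is_model :: "nat \<Rightarrow> nat \<Rightarrow> real \<Rightarrow> (nat \<Rightarrow> real) \<Rightarrow> (nat \<Rightarrow> nat \<Rightarrow> real)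
    \<Rightarrow> 'a measure \<Rightarrow> (nat \<Rightarrow> 'a measure) \<Rightarrow> (nat \<Rightarrow> 'a \<Rightarrow> real) \<Rightarrow> bool" where
  "is_model N J s0 x c M F X \<longleftrightarrow>
     prob_space M \<and>
     (\<forall>n\<le>N. subalgebra M (F n)) \<and>
     (\<forall>n m. n \<le> m \<and> m \<le> N \<longrightarrow> sets (F n) \<subseteq> sets (F m)) \<and>
     (\<forall>n\<le>N. X n \<in> borel_measurable (F n)) \<and>
     (\<forall>n\<le>N. integrable M (X n)) \<and>
     (\<forall>\<omega>\<in>space M. X 0 \<omega> = s0) \<and>
     (\<forall>n\<in>{1..N}. \<forall>\<omega>\<in>space M. X n \<omega> \<in> x ` {0..J}) \<and>
     (\<forall>n\<in>{1..N}. \<forall>j\<le>J. measure M {\<omega>\<in>space M. X n \<omega> = x j} = pmarg J x c j n) \<and>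
     (\<forall>n<N. AE \<omega> in M. real_cond_exp M (F n) (X (n+1)) \<omega> = X n \<omega>)"

definition is_markov_model :: "nat \<Rightarrow> nat \<Rightarrow> real \<Rightarrow> (nat \<Rightarrow> real) \<Rightarrow> (nat \<Rightarrow> nat \<Rightarrow> real)
    \<Rightarrow> 'a measure \<Rightarrow> (nat \<Rightarrow> 'a measure) \<Rightarrow> (nat \<Rightarrow> 'a \<Rightarrow> real) \<Rightarrow> bool" where
  "is_markov_model N J s0 x c M F X \<longleftrightarrow>
     is_model N J s0 x c M F X \<and>
     (\<forall>n<N. \<forall>k\<le>J. AE \<omega> in M.
        real_cond_exp M (F n) (indicator {\<omega>\<in>space M. X (n+1) \<omega> = x k}) \<omega> =
        real_cond_exp M (vimage_algebra (space M) (X n) borel)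
          (indicator {\<omega>\<in>space M. X (n+1) \<omega> = x k}) \<omega>)"

definition is_path :: "nat \<Rightarrow> nat \<Rightarrow> real \<Rightarrow> (nat \<Rightarrow> real) \<Rightarrow> (nat \<Rightarrow> real) \<Rightarrow> bool" where
  "is_path N J s0 x \<omega> \<longleftrightarrow> \<omega> 0 = s0 \<and> (\<forall>n\<in>{1..N}. \<omega> n \<in> x ` {0..J})"

text \<open>Self-financing semi-static strategy: static positions lam j n in the calls (bought at price
  c j n, financed with the bond), and a non-anticipative dynamic stock holding Delta n
  over [t_n, t_{n+1}) depending on the price history up to t_n. Discounted net gain:\<close>
definition gain :: "nat \<Rightarrow> nat \<Rightarrow> (nat \<Rightarrow> real) \<Rightarrow> (nat \<Rightarrow> nat \<Rightarrow> real) \<Rightarrow> (nat \<Rightarrow> nat \<Rightarrow> real)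
    \<Rightarrow> (nat \<Rightarrow> (nat \<Rightarrow> real) \<Rightarrow> real) \<Rightarrow> (nat \<Rightarrow> real) \<Rightarrow> real" where
  "gain N J x c lam Delta \<omega> =
     (\<Sum>n\<in>{1..N}. \<Sum>j\<in>{0..J}. lam j n * (max (\<omega> n - x j) 0 - c j n))
     + (\<Sum>n<N. Delta n \<omega> * (\<omega> (n+1) - \<omega> n))"

definition nonanticipative :: "(nat \<Rightarrow> (nat \<Rightarrow> real) \<Rightarrow> real) \<Rightarrow> bool" where
  "nonanticipative Delta \<longleftrightarrow>
     (\<forall>n \<omega> \<omega>'. (\<forall>i\<le>n. \<omega> i = \<omega>' i) \<longrightarrow> Delta n \<omega> = Delta n \<omega>')"

definition arbitrage_free :: "nat \<Rightarrow> nat \<Rightarrow> real \<Rightarrow> (nat \<Rightarrow> real) \<Rightarrow> (nat \<Rightarrow> nat \<Rightarrow> real) \<Rightarrow> bool" where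
  "arbitrage_free N J s0 x c \<longleftrightarrow>
     \<not> (\<exists>lam Delta. nonanticipative Delta \<and>
          (\<forall>\<omega>. is_path N J s0 x \<omega> \<longrightarrow> gain N J x c lam Delta \<omega> > 0))"

end

theory Submission
  imports Defs
begin



definition kern :: "nat \<Rightarrow> (nat\<Rightarrow>real) \<Rightarrow> (nat\<Rightarrow>nat\<Rightarrow>real) \<Rightarrow> bool" where
 "kern J x K \<longleftrightarrow> (\<forall>i\<le>J. (\<forall>m\<le>J. 0 \<le> K i m) \<and> (\<Sum>m\<le>J. K i m) = 1 \<and> (\<Sum>m\<le>J. K i m * x m) = x i)"

lemma conv_term:
  fixes u v y z d :: real
  assumes "u < v" "u \<le> y" "y \<le> v" "0 \<le> d \<or> z \<le> u \<or> v \<le> z"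
  shows "d * max (z - y) 0 \<le> (v - y)/(v - u) * (d * max (z - u) 0) + (1 - (v - y)/(v - u)) * (d * max (z - v) 0)"
proof -
  define l where "l = (v - y)/(v-u)"
  have l0: "0 \<le> l" "l \<le> 1" using assms unfolding l_def by (auto simp: field_simps)
  have y: "y = l * u + (1 - l) * v"
  proof -
    have "v - u \<noteq> 0" using assms by auto
    have "l * u + (1 - l) * v = v - l * (v - u)" by (simp add: algebra_simps)
    also have "l * (v - u) = v - y" unfolding l_def using \<open>v - u \<noteq> 0\<close> by simp
    finally show ?thesis by simp
  qed
  have conv: "max (z - y) 0 \<le> l * max (z - u) 0 + (1 - l) * max (z - v) 0"
  proof -
    have "z - y = l * (z - u) + (1 - l) * (z - v)" using y by (simp add: algebra_simps)
    also have "\<dots> \<le> l * max (z - u) 0 + (1 - l) * max (z - v) 0"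
      using l0 by (intro add_mono mult_left_mono) auto
    finally show ?thesis using l0 by (intro max.boundedI) auto
  qed
  show ?thesis
  proof (cases "0 \<le> d")
    case True
    have "d * max (z - y) 0 \<le> d * (l * max (z - u) 0 + (1 - l) * max (z - v) 0)"
      using conv True by (rule mult_left_mono)
    thus ?thesis unfolding l_def[symmetric] by (simp add: algebra_simps)
  next
    case False
    hence "z \<le> u \<or> v \<le> z" using assms by auto
    thus ?thesis
    proof
      assume "z \<le> u" thus ?thesis using assms by (auto simp: max_def)
    next
      assume "v \<le> z"
      hence m: "max (z - y) 0 = z - y" "max (z - u) 0 = z - u" "max (z - v) 0 = z - v"
        using assms by auto
      have "max (z - y) 0 = l * max (z - u) 0 + (1 - l) * max (z - v) 0"
        unfolding m using y by (simp add: algebra_simps)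
      hence "d * max (z - y) 0 = d * (l * max (z - u) 0 + (1 - l) * max (z - v) 0)"
        by simp
      hence "d * max (z - y) 0 = l * (d * max (z - u) 0) + (1 - l) * (d * max (z - v) 0)"
        by (simp add: algebra_simps)
      thus ?thesis unfolding l_def[symmetric] by simp
    qed
  qed
qed

lemma strassen:
  fixes J :: nat and x q p :: "nat \<Rightarrow> real"
  assumes J1: "1 \<le> J" and xinc: "\<And>i j. i < j \<Longrightarrow> j \<le> J \<Longrightarrow> x i < x j"
    and qnn: "\<And>m. m \<le> J \<Longrightarrow> 0 \<le> q m"
  shows "(\<And>m. m \<le> J \<Longrightarrow> 0 \<le> p m) \<Longrightarrow> (\<Sum>m\<le>J. p m) = (\<Sum>m\<le>J. q m)
    \<Longrightarrow> (\<Sum>m\<le>J. p m * x m) = (\<Sum>m\<le>J. q m * x m)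
    \<Longrightarrow> (\<And>l. l \<le> J \<Longrightarrow> (\<Sum>m\<le>J. p m * max (x m - x l) 0) \<le> (\<Sum>m\<le>J. q m * max (x m - x l) 0))
    \<Longrightarrow> \<exists>K. kern J x K \<and> (\<forall>m\<le>J. (\<Sum>i\<le>J. p i * K i m) = q m)"
proof (induction "card {m\<in>{..J}. p m \<noteq> q m}" arbitrary: p rule: less_induct)
  case less
  note pnn = less.prems(1) and psum = less.prems(2) and pmean = less.prems(3) and pcall = less.prems(4)
  let ?S = "{m\<in>{..J}. p m \<noteq> q m}"
  have xle: "\<And>i j. i \<le> j \<Longrightarrow> j \<le> J \<Longrightarrow> x i \<le> x j"
    using xinc by (metis le_less)
  define D where "D m = p m - q m" for m
  have dsum: "\<And>g. (\<Sum>m\<le>J. D m * g m) = (\<Sum>m\<le>J. p m * g m) - (\<Sum>m\<le>J. q m * g m)"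
    by (simp add: D_def sum_subtractf left_diff_distrib)
  have Phi: "\<And>l. l \<le> J \<Longrightarrow> (\<Sum>m\<le>J. D m * max (x m - x l) 0) \<le> 0"
    using pcall by (simp add: dsum)
  have sumD: "(\<Sum>m\<le>J. D m) = 0" using psum by (simp add: D_def sum_subtractf)
  have meanD: "(\<Sum>m\<le>J. D m * x m) = 0" using pmean by (simp add: dsum)
  have Psi: "(\<Sum>m\<le>J. D m * max (x l - x m) 0) \<le> 0" if "l \<le> J" for l
  proof -
    have "(\<Sum>m\<le>J. D m * max (x l - x m) 0) = (\<Sum>m\<le>J. D m * max (x m - x l) 0 + x l * D m - D m * x m)"
      by (rule sum.cong) (auto simp: max_def algebra_simps)
    also have "\<dots> = (\<Sum>m\<le>J. D m * max (x m - x l) 0) + x l * (\<Sum>m\<le>J. D m) - (\<Sum>m\<le>J. D m * x m)"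
      by (simp add: sum.distrib sum_subtractf sum_distrib_left)
    finally show ?thesis using Phi[OF that] sumD meanD by simp
  qed
  show ?case
  proof (cases "?S = {}")
    case True
    hence pq: "\<And>m. m \<le> J \<Longrightarrow> p m = q m" by auto
    define K :: "nat \<Rightarrow> nat \<Rightarrow> real" where "K i m = (if i = m then 1 else 0)" for i m
    have e1: "(\<Sum>m\<le>J. (if i = m then 1 else 0) * x m) = (\<Sum>m\<le>J. if i = m then x m else 0)" for i
      by (rule sum.cong) auto
    have e2: "(\<Sum>m\<le>J. (if i = m then 1 else 0::real)) = (\<Sum>m\<le>J. if i = m then 1 else 0)" for i
      by simp
    have "kern J x K" unfolding kern_def K_def by (simp only: e1) simp
    moreover have "\<forall>m\<le>J. (\<Sum>i\<le>J. p i * K i m) = q m"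
      unfolding K_def by (simp add: pq if_distrib cong: if_cong)
    ultimately show ?thesis by blast
  next
    case False
    have "\<exists>j\<le>J. D j > 0"
    proof (rule ccontr)
      assume "\<not> ?thesis"
      hence nn: "\<And>m. m \<in> {..J} \<Longrightarrow> 0 \<le> - D m" by force
      have "(\<Sum>m\<le>J. - D m) = 0" using sumD by (simp add: sum_negf)
      hence "\<forall>m\<in>{..J}. - D m = 0" using sum_nonneg_eq_0_iff[of "{..J}" "\<lambda>m. - D m"] nn by simp
      thus False using False by (auto simp: D_def)
    qed
    then obtain j where jJ: "j \<le> J" and Dj: "D j > 0" by blast
    have exi: "\<exists>i<j. D i < 0"
    proof (rule ccontr)
      assume "\<not> ?thesis"
      hence nn: "\<And>m. m \<le> j \<Longrightarrow> 0 \<le> D m" using Dj by (metis le_less not_le)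
      show False
      proof (cases "j < J")
        case True
        have t: "0 \<le> D m * max (x (j+1) - x m) 0" if "m \<in> {..J}" for m
        proof (cases "m \<le> j")
          case True thus ?thesis using nn by simp
        next
          case False hence "x (j+1) \<le> x m" using that by (intro xle) auto
          thus ?thesis by simp
        qed
        have "D j * max (x (j+1) - x j) 0 \<le> (\<Sum>m\<le>J. D m * max (x (j+1) - x m) 0)"
          using jJ by (intro member_le_sum t) auto
        moreover have "0 < D j * max (x (j+1) - x j) 0" using Dj xinc[of j "j+1"] True by simp
        ultimately show False using Psi[of "j+1"] True by simp
      next
        case False
        hence jeq: "j = J" using jJ by simp
        have "(\<Sum>m\<le>J. D m * max (x m - x (J-1)) 0) = (\<Sum>m\<le>J. if m = J then D J * (x J - x (J-1)) else 0)"
        proof (rule sum.cong)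
          fix m assume "m \<in> {..J}"
          thus "D m * max (x m - x (J-1)) 0 = (if m = J then D J * (x J - x (J-1)) else 0)"
            using xinc[of "J-1" J] xle[of m "J-1"] J1 by (cases "m = J") auto
        qed simp
        also have "\<dots> = D J * (x J - x (J-1))" by simp
        finally have "(\<Sum>m\<le>J. D m * max (x m - x (J-1)) 0) = D J * (x J - x (J-1))" .
        moreover have "0 < D J * (x J - x (J-1))" using Dj jeq xinc[of "J-1" J] J1 by simp
        ultimately show False using Phi[of "J-1"] by simp
      qed
    qed
    have exk: "\<exists>k. j < k \<and> k \<le> J \<and> D k < 0"
    proof (rule ccontr)
      assume "\<not> ?thesis"
      hence nn: "\<And>m. j \<le> m \<Longrightarrow> m \<le> J \<Longrightarrow> 0 \<le> D m" using Dj by (metis le_less not_le)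
      show False
      proof (cases "0 < j")
        case True
        have t: "0 \<le> D m * max (x m - x (j-1)) 0" if "m \<in> {..J}" for m
        proof (cases "j \<le> m")
          case True thus ?thesis using nn that by simp
        next
          case False hence "x m \<le> x (j-1)" using that jJ by (intro xle) auto
          thus ?thesis by simp
        qed
        have "D j * max (x j - x (j-1)) 0 \<le> (\<Sum>m\<le>J. D m * max (x m - x (j-1)) 0)"
          using jJ by (intro member_le_sum t) auto
        moreover have "0 < D j * max (x j - x (j-1)) 0" using Dj xinc[of "j-1" j] True jJ by simp
        moreover have "(\<Sum>m\<le>J. D m * max (x m - x (j-1)) 0) \<le> 0" using Phi[of "j-1"] jJ by simp
        ultimately show False by linarith
      next
        case False
        hence jeq: "j = 0" by simp
        have "(\<Sum>m\<le>J. D m * max (x 1 - x m) 0) = (\<Sum>m\<le>J. if m = 0 then D 0 * (x 1 - x 0) else 0)"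
        proof (rule sum.cong)
          fix m assume "m \<in> {..J}"
          thus "D m * max (x 1 - x m) 0 = (if m = 0 then D 0 * (x 1 - x 0) else 0)"
            using xinc[of 0 1] xle[of 1 m] J1 by (cases "m = 0") auto
        qed simp
        also have "\<dots> = D 0 * (x 1 - x 0)" by simp
        finally have "(\<Sum>m\<le>J. D m * max (x 1 - x m) 0) = D 0 * (x 1 - x 0)" .
        moreover have "0 < D 0 * (x 1 - x 0)" using Dj jeq xinc[of 0 1] J1 by simp
        ultimately show False using Psi[of 1] J1 by simp
      qed
    qed
    define i where "i = (GREATEST i. i < j \<and> D i < 0)"
    from exi obtain i0 where i0: "i0 < j \<and> D i0 < 0" by blast
    have iP: "i < j \<and> D i < 0" unfolding i_def
      by (rule GreatestI_nat[of _ i0 j]) (use i0 in auto)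
    have imax: "0 \<le> D m" if "i < m" "m < j" for m
    proof (rule ccontr)
      assume "\<not> 0 \<le> D m"
      hence "m \<le> i" unfolding i_def using that by (intro Greatest_le_nat[of _ m j]) auto
      thus False using that by simp
    qed
    define k where "k = (LEAST k. j < k \<and> k \<le> J \<and> D k < 0)"
    have kP: "j < k \<and> k \<le> J \<and> D k < 0" unfolding k_def using exk by (rule LeastI_ex)
    have kmin: "0 \<le> D m" if "j < m" "m < k" for m
    proof (rule ccontr)
      assume "\<not> 0 \<le> D m"
      hence "k \<le> m" unfolding k_def using that kP by (intro Least_le) auto
      thus False using that by simp
    qed
    have ij: "i < j" and jk: "j < k" and kJ: "k \<le> J" and Di: "D i < 0" and Dk: "D k < 0"
      using iP kP by auto
    have xij: "x i < x j" and xjk: "x j < x k" using xinc ij jk kJ jJ by auto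
    define a where "a = (x k - x j) / (x k - x i)"
    define b where "b = (x j - x i) / (x k - x i)"
    have a0: "0 < a" and b0: "0 < b" using xij xjk unfolding a_def b_def by auto
    have ab1: "a + b = 1"
    proof -
      have nz: "x k - x i \<noteq> 0" using xij xjk by simp
      have "a + b = ((x k - x j) + (x j - x i)) / (x k - x i)"
        unfolding a_def b_def by (rule add_divide_distrib[symmetric])
      thus ?thesis using nz by simp
    qed
    have abx: "a * x i + b * x k = x j"
    proof -
      have nz: "x k - x i \<noteq> 0" using xij xjk by simp
      have "a * x i + b * x k = ((x k - x j) * x i + (x j - x i) * x k) / (x k - x i)"
        unfolding a_def b_def by (simp only: add_divide_distrib times_divide_eq_left)
      also have "(x k - x j) * x i + (x j - x i) * x k = x j * (x k - x i)" by (simp add: algebra_simps)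
      finally show ?thesis using nz by simp
    qed
    define e where "e = min (D j) (min (- D i / a) (- D k / b))"
    have e0: "0 < e" unfolding e_def using Dj Di Dk a0 b0 by (auto simp: divide_neg_pos)
    have ej: "e \<le> D j" unfolding e_def by simp
    have "e \<le> - D i / a" unfolding e_def by simp
    hence ei: "e * a \<le> - D i" using a0 by (metis minus_divide_left pos_le_divide_eq)
    have "e \<le> - D k / b" unfolding e_def by simp
    hence ek: "e * b \<le> - D k" using b0 by (metis minus_divide_left pos_le_divide_eq)
    define p' where "p' m = p m + e * (a * (if m = i then 1 else 0) + b * (if m = k then 1 else 0) - (if m = j then 1 else 0))" for m
    have sumlem: "(\<Sum>m\<le>J. p' m * f m) = (\<Sum>m\<le>J. p m * f m) + e * (a * f i + b * f k - f j)" for f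
    proof -
      have "(\<Sum>m\<le>J. p' m * f m) = (\<Sum>m\<le>J. p m * f m + e * a * (if m = i then f m else 0)
            + e * b * (if m = k then f m else 0) - e * (if m = j then f m else 0))"
        by (rule sum.cong) (auto simp: p'_def algebra_simps)
      also have "\<dots> = (\<Sum>m\<le>J. p m * f m) + e * a * f i + e * b * f k - e * f j"
        using ij jk kJ jJ by (simp add: sum.distrib sum_subtractf sum_distrib_left[symmetric])
      finally show ?thesis by (simp add: algebra_simps)
    qed
    have p'nn: "0 \<le> p' m" if "m \<le> J" for m
    proof -
      have "i \<noteq> j" "j \<noteq> k" "i \<noteq> k" using ij jk by auto
      thus ?thesis using pnn[OF that] ej e0 a0 b0 qnn[OF that] by (auto simp: p'_def D_def)
    qed
    have p'sum: "(\<Sum>m\<le>J. p' m) = (\<Sum>m\<le>J. q m)"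
      using sumlem[of "\<lambda>_. 1"] psum ab1 by simp
    have p'mean: "(\<Sum>m\<le>J. p' m * x m) = (\<Sum>m\<le>J. q m * x m)"
      using sumlem[of x] pmean abx by simp
    define Phi' where "Phi' l = (\<Sum>m\<le>J. (p' m - q m) * max (x m - x l) 0)" for l
    have Phi'eq: "Phi' l = (\<Sum>m\<le>J. D m * max (x m - x l) 0) + e * (a * max (x i - x l) 0 + b * max (x k - x l) 0 - max (x j - x l) 0)" for l
      unfolding Phi'_def using sumlem[of "\<lambda>m. max (x m - x l) 0"]
      by (simp add: dsum sum_subtractf left_diff_distrib)
    have PhiA: "Phi' l \<le> 0" if "l \<le> i" for l
    proof -
      have "x l \<le> x i" using that ij jJ by (intro xle) auto
      hence m: "max (x i - x l) 0 = x i - x l" "max (x k - x l) 0 = x k - x l" "max (x j - x l) 0 = x j - x l"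
        using xij xjk by auto
      have "a * (x i - x l) + b * (x k - x l) - (x j - x l) = (a * x i + b * x k - x j) - (a + b - 1) * x l"
        by (simp add: algebra_simps)
      hence "a * max (x i - x l) 0 + b * max (x k - x l) 0 - max (x j - x l) 0 = 0"
        unfolding m using abx ab1 by simp
      thus ?thesis using Phi'eq[of l] Phi[of l] that ij jJ by simp
    qed
    have PhiB: "Phi' l \<le> 0" if "k \<le> l" "l \<le> J" for l
    proof -
      have "x k \<le> x l" using that by (intro xle) auto
      hence "a * max (x i - x l) 0 + b * max (x k - x l) 0 - max (x j - x l) 0 = 0"
        using xij xjk by (simp add: max_def)
      thus ?thesis using Phi'eq[of l] Phi[of l] that by simp
    qed
    have PhiC: "Phi' l \<le> 0" if "i < l" "l < k" for l
    proof -
      have xl: "x i \<le> x l" "x l \<le> x k" using that kJ by (auto intro: xle)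
      define lam where "lam = (x k - x l) / (x k - x i)"
      have lam: "0 \<le> lam" "lam \<le> 1" using xl xij xjk unfolding lam_def by auto
      have cond: "0 \<le> p' m - q m \<or> x m \<le> x i \<or> x k \<le> x m" if "m \<le> J" for m
      proof (cases "m \<le> i")
        case True thus ?thesis using xle[of m i] ij jJ by auto
      next
        case False
        show ?thesis
        proof (cases "k \<le> m")
          case True thus ?thesis using xle[of k m] that by auto
        next
          case False
          have "i < m" "m < k" using \<open>\<not> m \<le> i\<close> False by auto
          moreover have "i \<noteq> m" "k \<noteq> m" using \<open>i < m\<close> \<open>m < k\<close> by auto
          ultimately show ?thesis using imax kmin ej
            by (cases "m = j"; cases "m < j") (auto simp: p'_def D_def)
        qed
      qed
      have "Phi' l \<le> (\<Sum>m\<le>J. lam * ((p' m - q m) * max (x m - x i) 0) + (1 - lam) * ((p' m - q m) * max (x m - x k) 0))"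
        unfolding Phi'_def lam_def
        by (intro sum_mono conv_term) (use xij xjk xl cond in auto)
      also have "\<dots> = lam * Phi' i + (1 - lam) * Phi' k"
        unfolding Phi'_def by (simp add: sum.distrib sum_distrib_left)
      also have "\<dots> \<le> 0"
        using PhiA[of i] PhiB[of k] kJ lam by (simp add: add_nonpos_nonpos mult_nonneg_nonpos)
      finally show ?thesis .
    qed
    have p'call: "(\<Sum>m\<le>J. p' m * max (x m - x l) 0) \<le> (\<Sum>m\<le>J. q m * max (x m - x l) 0)" if "l \<le> J" for l
    proof -
      have "Phi' l \<le> 0" using PhiA PhiB PhiC that by (meson not_le)
      thus ?thesis unfolding Phi'_def by (simp add: sum_subtractf left_diff_distrib)
    qed
    let ?S' = "{m\<in>{..J}. p' m \<noteq> q m}"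
    have sub: "?S' \<subseteq> ?S"
    proof
      fix m assume m: "m \<in> ?S'"
      show "m \<in> ?S"
      proof (cases "m = i \<or> m = j \<or> m = k")
        case True thus ?thesis using Di Dj Dk ij jJ kJ by (auto simp: D_def)
      next
        case False thus ?thesis using m by (auto simp: p'_def)
      qed
    qed
    have "\<exists>t\<in>?S. t \<notin> ?S'"
    proof -
      have "i \<noteq> j" "j \<noteq> k" "i \<noteq> k" using ij jk by auto
      have "e = D j \<or> e = - D i / a \<or> e = - D k / b" unfolding e_def by (auto simp: min_def)
      moreover have "e = D j \<Longrightarrow> p' j = q j" using \<open>i \<noteq> j\<close> \<open>j \<noteq> k\<close> by (simp add: p'_def D_def)
      moreover have "e = - D i / a \<Longrightarrow> p' i = q i" using \<open>i \<noteq> j\<close> \<open>i \<noteq> k\<close> a0 by (simp add: p'_def D_def)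
      moreover have "e = - D k / b \<Longrightarrow> p' k = q k" using \<open>i \<noteq> k\<close> \<open>j \<noteq> k\<close> b0 by (simp add: p'_def D_def)
      moreover have "i \<in> ?S" "j \<in> ?S" "k \<in> ?S" using Di Dj Dk ij jJ kJ by (auto simp: D_def)
      ultimately show ?thesis by blast
    qed
    hence "?S' \<subset> ?S" using sub by blast
    hence "card ?S' < card ?S" by (intro psubset_card_mono) auto
    from less.hyps[OF this p'nn p'sum p'mean p'call]
    obtain K' where K': "kern J x K'" "\<forall>m\<le>J. (\<Sum>l\<le>J. p' l * K' l m) = q m" by blast
    have pj: "0 < p j" using Dj qnn[OF jJ] by (simp add: D_def)
    define th where "th = e / p j"
    have th: "0 \<le> th" "th \<le> 1" using e0 pj ej qnn[OF jJ] unfolding th_def D_def by (auto simp: field_simps)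
    define K where "K l m = K' l m + (if l = j then th * (a * K' i m + b * K' k m - K' j m) else 0)" for l m
    have "kern J x K"
      unfolding kern_def
    proof (intro allI impI conjI)
      fix l m assume l: "l \<le> J" "m \<le> J"
      show "0 \<le> K l m"
      proof (cases "l = j")
        case True
        have "K l m = (1 - th) * K' j m + th * a * K' i m + th * b * K' k m"
          using True by (simp add: K_def algebra_simps)
        moreover have "0 \<le> K' j m" "0 \<le> K' i m" "0 \<le> K' k m"
          using K'(1) l ij jJ kJ unfolding kern_def by auto
        ultimately show ?thesis using th a0 b0 by simp
      next
        case False thus ?thesis using K'(1) l unfolding kern_def K_def by auto
      qed
    next
      fix l assume l: "l \<le> J"
      have r: "(\<Sum>m\<le>J. K' r m) = 1" "(\<Sum>m\<le>J. K' r m * x m) = x r" if "r \<le> J" for r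
        using K'(1) that unfolding kern_def by auto
      have ri: "(\<Sum>m\<le>J. K' i m) = 1" "(\<Sum>m\<le>J. K' i m * x m) = x i" using r ij jJ by auto
      show "(\<Sum>m\<le>J. K l m) = 1"
      proof (cases "l = j")
        case True
        thus ?thesis using r[OF l] r[OF kJ] ri ab1
          by (simp add: K_def sum.distrib sum_subtractf sum_distrib_left[symmetric])
      next
        case False thus ?thesis using r[OF l] by (simp add: K_def)
      qed
      show "(\<Sum>m\<le>J. K l m * x m) = x l"
      proof (cases "l = j")
        case True
        have "(\<Sum>m\<le>J. K l m * x m) = (\<Sum>m\<le>J. K' j m * x m) + th * (a * (\<Sum>m\<le>J. K' i m * x m) + b * (\<Sum>m\<le>J. K' k m * x m) - (\<Sum>m\<le>J. K' j m * x m))"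
          using True by (simp add: K_def algebra_simps sum.distrib sum_subtractf sum_distrib_left)
        also have "\<dots> = x j" using r[OF jJ] r[OF kJ] ri abx by simp
        finally show ?thesis using True by simp
      next
        case False thus ?thesis using r[OF l] by (simp add: K_def)
      qed
    qed
    moreover have "\<forall>m\<le>J. (\<Sum>l\<le>J. p l * K l m) = q m"
    proof (intro allI impI)
      fix m assume m: "m \<le> J"
      have "(\<Sum>l\<le>J. p l * K l m) = (\<Sum>l\<le>J. p l * K' l m + (if l = j then p j * th * (a * K' i m + b * K' k m - K' j m) else 0))"
        by (rule sum.cong) (auto simp: K_def algebra_simps)
      also have "\<dots> = (\<Sum>l\<le>J. p l * K' l m) + e * (a * K' i m + b * K' k m - K' j m)"
        using jJ pj by (simp add: sum.distrib th_def)
      also have "\<dots> = (\<Sum>l\<le>J. p' l * K' l m)" using sumlem[of "\<lambda>l. K' l m"] by simp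
      also have "\<dots> = q m" using K'(2) m by simp
      finally show "(\<Sum>l\<le>J. p l * K l m) = q m" .
    qed
    ultimately show ?thesis by blast
  qed
qed




locale setting =
  fixes N J :: nat and s0 :: real and x :: "nat \<Rightarrow> real" and c :: "nat \<Rightarrow> nat \<Rightarrow> real"
  assumes N1: "N \<ge> 1" and J1: "J \<ge> 1" and s0pos: "s0 > 0" and x0: "x 0 = 0"
    and xstep: "\<forall>j<J. x j < x (j+1)" and C: "conds_C N J s0 x c"
begin

lemma xinc: "i < j \<Longrightarrow> j \<le> J \<Longrightarrow> x i < x j"
proof (induction j)
  case 0 thus ?case by simp
next
  case (Suc j)
  have "x j < x (Suc j)" using xstep Suc.prems by simp
  thus ?case using Suc by (cases "i = j") auto
qed

lemma xle: "i \<le> j \<Longrightarrow> j \<le> J \<Longrightarrow> x i \<le> x j"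
  using xinc by (metis le_less)

lemma xinj: "i \<le> J \<Longrightarrow> j \<le> J \<Longrightarrow> x i = x j \<Longrightarrow> i = j"
  using xinc by (metis less_irrefl nat_neq_iff)

lemma xnn: "j \<le> J \<Longrightarrow> 0 \<le> x j"
  using xle[of 0 j] x0 by simp

lemma c0: "n \<in> {1..N} \<Longrightarrow> c 0 n = s0" using C unfolding conds_C_def by blast

lemma cdec: "n \<in> {1..N} \<Longrightarrow> j < J \<Longrightarrow> c (j+1) n \<le> c j n" using C unfolding conds_C_def by blast

lemma cJnn: "n \<in> {1..N} \<Longrightarrow> 0 \<le> c J n" using C unfolding conds_C_def by blast

lemma cmono: "1 \<le> n \<Longrightarrow> n < N \<Longrightarrow> j \<le> J \<Longrightarrow> c j n \<le> c j (n+1)"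
  using C unfolding conds_C_def by blast

lemma cJ0: "n \<in> {1..N} \<Longrightarrow> c J n = 0"
proof -
  assume n: "n \<in> {1..N}"
  have "c J n \<le> c J N"
  proof -
    have "\<forall>m. n \<le> m \<longrightarrow> m \<le> N \<longrightarrow> c J n \<le> c J m"
    proof (intro allI impI)
      fix m assume "n \<le> m" "m \<le> N"
      thus "c J n \<le> c J m"
      proof (induction m)
        case 0 thus ?case by simp
      next
        case (Suc m)
        show ?case
        proof (cases "n = Suc m")
          case True thus ?thesis by simp
        next
          case False
          hence "n \<le> m" using Suc by simp
          hence "c J n \<le> c J m" using Suc by simp
          also have "c J m \<le> c J (m+1)" using cmono[of m J] Suc \<open>n \<le> m\<close> n by simp
          finally show ?thesis by simp
        qed
      qed
    qed
    thus ?thesis using n by auto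
  qed
  moreover have "c J N = 0" using C unfolding conds_C_def by blast
  ultimately show ?thesis using cJnn[OF n] by simp
qed

definition P :: "nat \<Rightarrow> nat \<Rightarrow> real" where "P n j = pmarg J x c j n"

definition sl :: "nat \<Rightarrow> nat \<Rightarrow> real" where
  "sl n j = (if j = 0 then 1 else if j \<le> J then (c (j-1) n - c j n) / (x j - x (j-1)) else 0)"

lemma P_sl: "j \<le> J \<Longrightarrow> P n j = sl n j - sl n (j+1)"
  unfolding P_def pmarg_def sl_def using J1 x0 by auto

lemma Pnn: assumes n: "n \<in> {1..N}" and j: "j \<le> J" shows "0 \<le> P n j"
proof -
  have C2: "1 \<ge> (c 0 n - c 1 n) / x 1"
     "\<And>j. 1 \<le> j \<Longrightarrow> j < J \<Longrightarrow> (c (j-1) n - c j n) / (x j - x (j-1)) \<ge> (c j n - c (j+1) n) / (x (j+1) - x j)"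
    using C n unfolding conds_C_def by blast+
  show ?thesis
  proof (cases "j = 0")
    case True thus ?thesis using C2(1) by (simp add: P_def pmarg_def)
  next
    case False
    show ?thesis
    proof (cases "j < J")
      case True thus ?thesis using C2(2)[of j] False by (simp add: P_def pmarg_def)
    next
      case False
      hence jJ: "j = J" using j by simp
      have "c (J-1+1) n \<le> c (J-1) n" using cdec[OF n, of "J-1"] J1 by simp
      moreover have "x (J-1) < x J" using xinc[of "J-1" J] J1 by simp
      ultimately show ?thesis using jJ J1 \<open>j \<noteq> 0\<close> by (simp add: P_def pmarg_def)
    qed
  qed
qed

lemma Psum: "(\<Sum>j\<le>J. P n j) = 1"
proof -
  have "(\<Sum>j\<le>J. P n j) = (\<Sum>j\<le>J. sl n j - sl n (Suc j))" by (simp add: P_sl)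
  also have "\<dots> = sl n 0 - sl n (Suc J)" by (rule sum_telescope)
  finally show ?thesis by (simp add: sl_def)
qed

lemma Ptail: "l < J \<Longrightarrow> (\<Sum>m\<le>J. if l < m then P n m else 0) = sl n (l+1)"
proof -
  assume l: "l < J"
  have "(\<Sum>m\<le>J. if l < m then P n m else 0) = (\<Sum>m\<le>J. P n m) - (\<Sum>m\<le>J. if m \<le> l then P n m else 0)"
    by (simp add: sum_subtractf[symmetric] not_le) (rule sum.cong, auto)
  also have "(\<Sum>m\<le>J. if m \<le> l then P n m else 0) = sum (P n) ({..J} \<inter> {..l})"
    by (simp only: sum.inter_restrict[OF finite_atMost]) (simp add: atMost_iff)
  also have "{..J} \<inter> {..l} = {..l}" using l by auto
  also have "sum (P n) {..l} = (\<Sum>j\<le>l. sl n j - sl n (Suc j))" using l by (simp add: P_sl)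
  also have "\<dots> = sl n 0 - sl n (Suc l)" by (rule sum_telescope)
  finally show ?thesis using Psum[of n] by (simp add: sl_def)
qed

lemma Pcall: assumes n: "n \<in> {1..N}" and l: "l \<le> J"
  shows "(\<Sum>m\<le>J. P n m * max (x m - x l) 0) = c l n"
  using l
proof (induction l rule: inc_induct)
  case base
  have "(\<Sum>m\<le>J. P n m * max (x m - x J) 0) = 0"
    by (rule sum.neutral) (auto intro: xle simp: max_def)
  thus ?case using cJ0[OF n] by simp
next
  case (step l)
  have "(\<Sum>m\<le>J. P n m * max (x m - x l) 0)
      = (\<Sum>m\<le>J. P n m * max (x m - x (Suc l)) 0 + (x (Suc l) - x l) * (if l < m then P n m else 0))"
  proof (rule sum.cong)
    fix m assume m: "m \<in> {..J}"
    show "P n m * max (x m - x l) 0 = P n m * max (x m - x (Suc l)) 0 + (x (Suc l) - x l) * (if l < m then P n m else 0)"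
    proof (cases "l < m")
      case True
      hence "x (Suc l) \<le> x m" "x l < x (Suc l)" using m step xle xinc by auto
      thus ?thesis using True by (simp add: max_def algebra_simps)
    next
      case False
      hence "x m \<le> x l" "x l < x (Suc l)" using m step xle xinc by auto
      thus ?thesis using False by (simp add: max_def)
    qed
  qed simp
  also have "\<dots> = c (Suc l) n + (x (Suc l) - x l) * sl n (l+1)"
    using step by (simp add: sum.distrib sum_distrib_left[symmetric] Ptail)
  also have "(x (Suc l) - x l) * sl n (l+1) = c l n - c (Suc l) n"
    using step xinc[of l "Suc l"] by (simp add: sl_def)
  finally show ?case by simp
qed

lemma Pmean: "n \<in> {1..N} \<Longrightarrow> (\<Sum>m\<le>J. P n m * x m) = s0"
proof -
  assume n: "n \<in> {1..N}"
  have "(\<Sum>m\<le>J. P n m * x m) = (\<Sum>m\<le>J. P n m * max (x m - x 0) 0)"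
  proof (rule sum.cong)
    fix m assume "m \<in> {..J}"
    hence "0 \<le> x m" using xnn by simp
    thus "P n m * x m = P n m * max (x m - x 0) 0" by (simp add: x0)
  qed simp
  thus ?thesis using Pcall[OF n, of 0] c0[OF n] by simp
qed

lemma kernel_exists: assumes "1 \<le> n" "n < N"
  shows "\<exists>K. kern J x K \<and> (\<forall>m\<le>J. (\<Sum>i\<le>J. P n i * K i m) = P (n+1) m)"
proof (rule strassen[OF J1])
  show "\<And>i j. i < j \<Longrightarrow> j \<le> J \<Longrightarrow> x i < x j" by (rule xinc)
  have n: "n \<in> {1..N}" "n+1 \<in> {1..N}" using assms by auto
  show "\<And>m. m \<le> J \<Longrightarrow> 0 \<le> P (n+1) m" "\<And>m. m \<le> J \<Longrightarrow> 0 \<le> P n m" using Pnn n by auto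
  show "(\<Sum>m\<le>J. P n m) = (\<Sum>m\<le>J. P (n+1) m)" by (simp add: Psum)
  show "(\<Sum>m\<le>J. P n m * x m) = (\<Sum>m\<le>J. P (n+1) m * x m)" using n by (simp add: Pmean)
  show "\<And>l. l \<le> J \<Longrightarrow> (\<Sum>m\<le>J. P n m * max (x m - x l) 0) \<le> (\<Sum>m\<le>J. P (n+1) m * max (x m - x l) 0)"
    using n Pcall cmono assms by simp
qed

end



lemma int_return: "measure_pmf.expectation (return_pmf a) f = (f a :: real)"
  by (subst integral_measure_pmf_real[of "{a}"]) auto

lemma integral_bind_fin:
  fixes f :: "'b \<Rightarrow> real"
  assumes fM: "finite (set_pmf M)" and fN: "\<And>a. a \<in> set_pmf M \<Longrightarrow> finite (set_pmf (Nf a))"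
  shows "measure_pmf.expectation (bind_pmf M Nf) f = measure_pmf.expectation M (\<lambda>a. measure_pmf.expectation (Nf a) f)"
proof -
  define A where "A = set_pmf (bind_pmf M Nf)"
  have fA: "finite A" unfolding A_def set_bind_pmf using fM fN by (rule finite_UN_I)
  have "measure_pmf.expectation (bind_pmf M Nf) f = (\<Sum>y\<in>A. f y * pmf (bind_pmf M Nf) y)"
    by (rule integral_measure_pmf_real[OF fA]) (auto simp: A_def)
  also have "\<dots> = (\<Sum>y\<in>A. f y * measure_pmf.expectation M (\<lambda>a. pmf (Nf a) y))"
    by (simp add: pmf_bind)
  also have "\<dots> = (\<Sum>y\<in>A. measure_pmf.expectation M (\<lambda>a. f y * pmf (Nf a) y))"
    by simp
  also have "\<dots> = measure_pmf.expectation M (\<lambda>a. \<Sum>y\<in>A. f y * pmf (Nf a) y)"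
    by (rule Bochner_Integration.integral_sum[symmetric, where f="\<lambda>y a. f y * pmf (Nf a) y"]) (simp add: integrable_measure_pmf_finite[OF fM])
  also have "\<dots> = measure_pmf.expectation M (\<lambda>a. measure_pmf.expectation (Nf a) f)"
  proof (rule integral_cong_AE)
    show "AE a in measure_pmf M. (\<Sum>y\<in>A. f y * pmf (Nf a) y) = measure_pmf.expectation (Nf a) f"
      unfolding AE_measure_pmf_iff
    proof
      fix a assume a: "a \<in> set_pmf M"
      show "(\<Sum>y\<in>A. f y * pmf (Nf a) y) = measure_pmf.expectation (Nf a) f"
        by (rule integral_measure_pmf_real[OF fA, symmetric]) (use a in \<open>auto simp: A_def\<close>)
    qed
  qed simp_all
  finally show ?thesis .
qed

lemma pos_expectation:
  fixes f :: "'b \<Rightarrow> real"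
  assumes "finite (set_pmf M)" "\<And>a. a \<in> set_pmf M \<Longrightarrow> 0 < f a"
  shows "0 < measure_pmf.expectation M f"
proof -
  have "measure_pmf.expectation M f = (\<Sum>a\<in>set_pmf M. f a * pmf M a)"
    by (rule integral_measure_pmf_real) (use assms in auto)
  also have "0 < \<dots>"
    by (rule sum_pos) (auto intro!: mult_pos_pos assms(2) pmf_positive simp: assms(1) set_pmf_not_empty)
  finally show ?thesis .
qed

definition dep :: "nat \<Rightarrow> ((nat \<Rightarrow> real) \<Rightarrow> 'b) \<Rightarrow> bool" where
  "dep n h \<longleftrightarrow> (\<forall>w w'. (\<forall>i\<le>n. w i = w' i) \<longrightarrow> h w = h w')"

lemma dep_mono: "dep m h \<Longrightarrow> m \<le> n \<Longrightarrow> dep n h"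
  unfolding dep_def by auto

lemma dep_upd: "dep m h \<Longrightarrow> m < k \<Longrightarrow> h (w(k := v)) = h w"
  unfolding dep_def by auto

lemma fin_comp_meas:
  fixes X :: "'a \<Rightarrow> real" and h :: "real \<Rightarrow> real"
  assumes X[measurable]: "X \<in> borel_measurable G" and S: "finite S" "\<And>w. w \<in> space G \<Longrightarrow> X w \<in> S"
  shows "(\<lambda>w. h (X w)) \<in> borel_measurable G"
proof -
  have m: "(\<lambda>w. \<Sum>v\<in>S. h v * indicator {v} (X w)) \<in> borel_measurable G"
    by measurable
  have eq: "h (X w) = (\<Sum>v\<in>S. h v * indicator {v} (X w))" if "w \<in> space G" for w
  proof -
    have "(\<Sum>v\<in>S. h v * indicator {v} (X w)) = (\<Sum>v\<in>S. if v = X w then h v else 0)"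
      by (rule sum.cong) (auto simp: indicator_def)
    also have "\<dots> = h (X w)" using S(1) S(2)[OF that] by simp
    finally show ?thesis by simp
  qed
  show ?thesis by (subst measurable_cong[OF eq]) (use m in auto)
qed

context setting
begin

definition Kk :: "nat \<Rightarrow> nat \<Rightarrow> nat \<Rightarrow> real" where
  "Kk n = (SOME K. kern J x K \<and> (\<forall>m\<le>J. (\<Sum>i\<le>J. P n i * K i m) = P (n+1) m))"

lemma Kk: assumes "1 \<le> n" "n < N"
  shows "kern J x (Kk n)" "\<And>m. m \<le> J \<Longrightarrow> (\<Sum>i\<le>J. P n i * Kk n i m) = P (n+1) m"
  using someI_ex[OF kernel_exists[OF assms]] unfolding Kk_def by auto

definition row :: "nat \<Rightarrow> nat \<Rightarrow> nat \<Rightarrow> real" where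
  "row n i = (if n = 0 then P 1 else if n < N then Kk n i else (\<lambda>m. if m = i then 1 else 0))"

lemma kernD: "kern J x K \<Longrightarrow> i \<le> J \<Longrightarrow> m \<le> J \<Longrightarrow> 0 \<le> K i m"
  "kern J x K \<Longrightarrow> i \<le> J \<Longrightarrow> (\<Sum>m\<le>J. K i m) = 1"
  "kern J x K \<Longrightarrow> i \<le> J \<Longrightarrow> (\<Sum>m\<le>J. K i m * x m) = x i"
  unfolding kern_def by blast+

lemma delta_sum: "i \<le> J \<Longrightarrow> (\<Sum>m\<le>J. (if m = i then 1 else 0) * g m) = (g i :: real)"
proof -
  assume i: "i \<le> J"
  have "(\<Sum>m\<le>J. (if m = i then 1 else 0) * g m) = (\<Sum>m\<le>J. if m = i then g m else 0)"
    by (rule sum.cong) auto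
  also have "\<dots> = g i" using i by simp
  finally show ?thesis .
qed

lemma row_nn: "i \<le> J \<Longrightarrow> m \<le> J \<Longrightarrow> 0 \<le> row n i m"
proof -
  assume i: "i \<le> J" and m: "m \<le> J"
  have one: "1 \<in> {1..N}" using N1 by auto
  show ?thesis
  proof (cases "n = 0")
    case True thus ?thesis using Pnn[OF one m] unfolding row_def by simp
  next
    case False
    show ?thesis
    proof (cases "n < N")
      case True
      have "kern J x (Kk n)" using False True by (intro Kk(1)) auto
      thus ?thesis using kernD(1)[OF _ i m] False True unfolding row_def by simp
    next
      case nN: False
      thus ?thesis using False unfolding row_def by simp
    qed
  qed
qed

lemma row_sum: "i \<le> J \<Longrightarrow> (\<Sum>m\<le>J. row n i m) = 1"
proof -
  assume i: "i \<le> J"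
  show ?thesis
  proof (cases "n = 0")
    case True thus ?thesis using Psum[of 1] unfolding row_def by simp
  next
    case False
    show ?thesis
    proof (cases "n < N")
      case True
      have "kern J x (Kk n)" using False True by (intro Kk(1)) auto
      thus ?thesis using kernD(2)[OF _ i] False True unfolding row_def by simp
    next
      case nN: False
      thus ?thesis using False delta_sum[OF i, of "\<lambda>_. 1"] unfolding row_def by simp
    qed
  qed
qed

lemmas row_valid = row_nn row_sum

lemma row_mean: assumes i: "i \<le> J" and n: "1 \<le> n"
  shows "(\<Sum>m\<le>J. row n i m * x m) = x i"
proof (cases "n < N")
  case True
  have "kern J x (Kk n)" using n True by (intro Kk(1)) auto
  thus ?thesis using kernD(3)[OF _ i] n True unfolding row_def by simp
next
  case False
  thus ?thesis using n delta_sum[OF i, of x] unfolding row_def by simp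
qed

lemma row0_mean: "(\<Sum>m\<le>J. row 0 i m * x m) = s0"
  using Pmean[of 1] N1 unfolding row_def by simp

definition wpmf :: "(nat \<Rightarrow> real) \<Rightarrow> real pmf" where
  "wpmf w = map_pmf x (embed_pmf (\<lambda>m. if m \<le> J then w m else 0))"

lemma wpmf: assumes nn: "\<And>m. m \<le> J \<Longrightarrow> 0 \<le> w m" and s: "(\<Sum>m\<le>J. w m) = 1"
  shows "measure_pmf.expectation (wpmf w) f = (\<Sum>m\<le>J. w m * f (x m))"
    and "set_pmf (wpmf w) \<subseteq> x ` {..J}"
proof -
  define g where "g m = (if m \<le> J then w m else 0)" for m
  have gnn: "\<And>m. 0 \<le> g m" using nn unfolding g_def by auto
  have "(\<integral>\<^sup>+m. ennreal (g m) \<partial>count_space UNIV) = (\<Sum>m\<le>J. ennreal (g m))"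
    by (rule nn_integral_count_space') (auto simp: g_def)
  also have "\<dots> = ennreal (\<Sum>m\<le>J. g m)" using gnn by (simp add: sum_ennreal)
  also have "(\<Sum>m\<le>J. g m) = 1" using s unfolding g_def by simp
  finally have prob: "(\<integral>\<^sup>+m. ennreal (g m) \<partial>count_space UNIV) = 1" by simp
  have pm: "pmf (embed_pmf g) m = g m" for m by (rule pmf_embed_pmf[OF gnn prob])
  have se: "set_pmf (embed_pmf g) \<subseteq> {..J}"
  proof
    fix m assume "m \<in> set_pmf (embed_pmf g)"
    hence "g m \<noteq> 0" unfolding set_embed_pmf[OF gnn prob] by simp
    thus "m \<in> {..J}" unfolding g_def by (cases "m \<le> J") auto
  qed
  have "measure_pmf.expectation (wpmf w) f = measure_pmf.expectation (embed_pmf g) (\<lambda>m. f (x m))"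
    unfolding wpmf_def g_def by simp
  also have "\<dots> = (\<Sum>m\<le>J. f (x m) * pmf (embed_pmf g) m)"
    by (rule integral_measure_pmf_real) (use se in auto)
  also have "\<dots> = (\<Sum>m\<le>J. w m * f (x m))" by (rule sum.cong) (auto simp: pm g_def)
  finally show "measure_pmf.expectation (wpmf w) f = (\<Sum>m\<le>J. w m * f (x m))" .
  show "set_pmf (wpmf w) \<subseteq> x ` {..J}" unfolding wpmf_def g_def[symmetric] using se by auto
qed

definition idx :: "real \<Rightarrow> nat" where
  "idx v = (if v \<in> x ` {..J} then inv_into {..J} x v else 0)"

lemma idx_le: "idx v \<le> J"
  using inv_into_into[of v x "{..J}"] unfolding idx_def by auto

lemma inj_x: "inj_on x {..J}"
  by (rule inj_onI) (auto intro: xinj)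

lemma idx_x: "i \<le> J \<Longrightarrow> idx (x i) = i"
  unfolding idx_def using inv_into_f_f[OF inj_x] by auto

definition st :: "nat \<Rightarrow> real \<Rightarrow> real pmf" where "st n v = wpmf (row n (idx v))"

lemma st_int: fixes f :: "real \<Rightarrow> real" shows "measure_pmf.expectation (st n v) f = (\<Sum>m\<le>J. row n (idx v) m * f (x m))"
  unfolding st_def by (rule wpmf(1)) (use row_valid idx_le in auto)

lemma st_set: "set_pmf (st n v) \<subseteq> x ` {..J}"
  unfolding st_def by (rule wpmf(2)) (use row_valid idx_le in auto)

lemma st_fin: "finite (set_pmf (st n v))"
  using st_set by (rule finite_subset) simp

primrec Q :: "nat \<Rightarrow> (nat \<Rightarrow> real) pmf" where
  "Q 0 = return_pmf (\<lambda>_. s0)"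
| "Q (Suc n) = bind_pmf (Q n) (\<lambda>w. map_pmf (\<lambda>v. w(Suc n := v)) (st n (w n)))"

lemma finQ: "finite (set_pmf (Q n))"
  by (induction n) (auto intro: st_fin)

lemma suppQ: "w \<in> set_pmf (Q n) \<Longrightarrow> w 0 = s0 \<and> (\<forall>m. 1 \<le> m \<and> m \<le> n \<longrightarrow> w m \<in> x ` {..J})"
proof (induction n arbitrary: w)
  case 0
  hence "w = (\<lambda>_. s0)" by simp
  thus ?case by simp
next
  case (Suc n)
  have "w \<in> (\<Union>w0\<in>set_pmf (Q n). (\<lambda>v. w0(Suc n := v)) ` set_pmf (st n (w0 n)))"
    using Suc.prems by (simp only: Q.simps set_bind_pmf set_map_pmf)
  then obtain w0 v where w: "w0 \<in> set_pmf (Q n)" "v \<in> set_pmf (st n (w0 n))" "w = w0(Suc n := v)"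
    by blast
  have v: "v \<in> x ` {..J}" using w(2) st_set by blast
  have IH: "w0 0 = s0" "\<And>m. 1 \<le> m \<Longrightarrow> m \<le> n \<Longrightarrow> w0 m \<in> x ` {..J}"
    using Suc.IH[OF w(1)] by blast+
  show ?case
  proof (intro conjI allI impI)
    show "w 0 = s0" using IH(1) unfolding w(3) by simp
    fix m assume m: "1 \<le> m \<and> m \<le> Suc n"
    show "w m \<in> x ` {..J}"
    proof (cases "m = Suc n")
      case True thus ?thesis using v unfolding w(3) by simp
    next
      case False
      hence "w m = w0 m" "m \<le> n" using m unfolding w(3) by auto
      thus ?thesis using IH(2)[of m] m by simp
    qed
  qed
qed

lemma EQsuc: fixes h :: "(nat \<Rightarrow> real) \<Rightarrow> real" shows "measure_pmf.expectation (Q (Suc n)) h =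
   measure_pmf.expectation (Q n) (\<lambda>w. measure_pmf.expectation (st n (w n)) (\<lambda>v. h (w(Suc n := v))))"
proof -
  have "measure_pmf.expectation (Q (Suc n)) h = measure_pmf.expectation (Q n)
     (\<lambda>w. measure_pmf.expectation (map_pmf (\<lambda>v. w(Suc n := v)) (st n (w n))) h)"
    by (simp only: Q.simps(2)) (rule integral_bind_fin[OF finQ], simp add: st_fin)
  thus ?thesis by simp
qed

lemma EQ_dep: "dep m h \<Longrightarrow> m \<le> n \<Longrightarrow> measure_pmf.expectation (Q n) h = measure_pmf.expectation (Q m) (h :: _ \<Rightarrow> real)"
proof (induction n)
  case 0 hence "m = 0" by simp
  thus ?case by simp
next
  case (Suc n)
  show ?case
  proof (cases "m = Suc n")
    case True thus ?thesis by simp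
  next
    case False
    hence mn: "m \<le> n" using Suc by simp
    have hh: "h (w(Suc n := v)) = h w" for w v
      by (rule dep_upd[OF Suc.prems(1)]) (use mn in simp)
    have "measure_pmf.expectation (Q (Suc n)) h = measure_pmf.expectation (Q n) (\<lambda>w. measure_pmf.expectation (st n (w n)) (\<lambda>v. h w))"
      by (simp only: EQsuc hh)
    also have "\<dots> = measure_pmf.expectation (Q n) h"
    proof -
      have c: "measure_pmf.expectation (st n (w n)) (\<lambda>v. h w) = h w" for w by simp
      show ?thesis by (simp only: c)
    qed
    also have "\<dots> = measure_pmf.expectation (Q m) h" by (rule Suc.IH[OF Suc.prems(1) mn])
    finally show ?thesis .
  qed
qed

lemma keyb: fixes \<psi> :: "(nat \<Rightarrow> real) \<Rightarrow> real" and f :: "real \<Rightarrow> real"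
  assumes n: "n < N" and d: "dep n \<psi>"
  shows "measure_pmf.expectation (Q N) (\<lambda>w. \<psi> w * f (w (Suc n))) =
         measure_pmf.expectation (Q N) (\<lambda>w. \<psi> w * measure_pmf.expectation (st n (w n)) f)"
proof -
  have d1: "dep (Suc n) (\<lambda>w. \<psi> w * f (w (Suc n)))"
    unfolding dep_def
  proof (intro allI impI)
    fix w w' :: "nat \<Rightarrow> real" assume a: "\<forall>i\<le>Suc n. w i = w' i"
    hence "\<psi> w = \<psi> w'" using d unfolding dep_def by auto
    moreover have "w (Suc n) = w' (Suc n)" using a by auto
    ultimately show "\<psi> w * f (w (Suc n)) = \<psi> w' * f (w' (Suc n))" by simp
  qed
  have d2: "dep n (\<lambda>w. \<psi> w * measure_pmf.expectation (st n (w n)) f)"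
    unfolding dep_def
  proof (intro allI impI)
    fix w w' :: "nat \<Rightarrow> real" assume a: "\<forall>i\<le>n. w i = w' i"
    hence "\<psi> w = \<psi> w'" using d unfolding dep_def by auto
    moreover have "w n = w' n" using a by auto
    ultimately show "\<psi> w * measure_pmf.expectation (st n (w n)) f = \<psi> w' * measure_pmf.expectation (st n (w' n)) f" by simp
  qed
  have hh: "\<psi> (w(Suc n := v)) = \<psi> w" for w v
    by (rule dep_upd[OF d]) simp
  have "measure_pmf.expectation (Q N) (\<lambda>w. \<psi> w * f (w (Suc n))) =
        measure_pmf.expectation (Q (Suc n)) (\<lambda>w. \<psi> w * f (w (Suc n)))"
    by (rule EQ_dep[OF d1]) (use n in simp)
  also have "\<dots> = measure_pmf.expectation (Q n) (\<lambda>w. measure_pmf.expectation (st n (w n)) (\<lambda>v. \<psi> w * f v))"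
    unfolding EQsuc by (simp only: hh fun_upd_same)
  also have "\<dots> = measure_pmf.expectation (Q n) (\<lambda>w. \<psi> w * measure_pmf.expectation (st n (w n)) f)"
    by simp
  also have "\<dots> = measure_pmf.expectation (Q N) (\<lambda>w. \<psi> w * measure_pmf.expectation (st n (w n)) f)"
    by (rule EQ_dep[OF d2, symmetric]) (use n in simp)
  finally show ?thesis .
qed

lemma marg: fixes h :: "real \<Rightarrow> real" shows "1 \<le> n \<Longrightarrow> n \<le> N \<Longrightarrow> measure_pmf.expectation (Q n) (\<lambda>w. h (w n)) = (\<Sum>i\<le>J. P n i * h (x i))"
proof (induction n arbitrary: h)
  case 0 thus ?case by simp
next
  case (Suc n)
  have "measure_pmf.expectation (Q (Suc n)) (\<lambda>w. h (w (Suc n))) =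
        measure_pmf.expectation (Q n) (\<lambda>w. \<Sum>m\<le>J. row n (idx (w n)) m * h (x m))"
    unfolding EQsuc by (simp add: st_int)
  also have "\<dots> = (\<Sum>i\<le>J. P (Suc n) i * h (x i))"
  proof (cases "n = 0")
    case True thus ?thesis by (simp add: int_return row_def)
  next
    case False
    hence n: "1 \<le> n" "n < N" using Suc by auto
    have "measure_pmf.expectation (Q n) (\<lambda>w. \<Sum>m\<le>J. row n (idx (w n)) m * h (x m))
        = (\<Sum>i\<le>J. P n i * (\<Sum>m\<le>J. row n (idx (x i)) m * h (x m)))"
      by (rule Suc.IH[of "\<lambda>v. \<Sum>m\<le>J. row n (idx v) m * h (x m)"]) (use n in auto)
    also have "\<dots> = (\<Sum>i\<le>J. \<Sum>m\<le>J. P n i * Kk n i m * h (x m))"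
      using n by (simp add: idx_x row_def sum_distrib_left mult.assoc)
    also have "\<dots> = (\<Sum>m\<le>J. (\<Sum>i\<le>J. P n i * Kk n i m) * h (x m))"
      unfolding sum_distrib_right by (rule sum.swap)
    also have "\<dots> = (\<Sum>m\<le>J. P (Suc n) m * h (x m))"
      using Kk(2)[OF n] by simp
    finally show ?thesis .
  qed
  finally show ?case .
qed

lemma margN: fixes h :: "real \<Rightarrow> real" shows "1 \<le> n \<Longrightarrow> n \<le> N \<Longrightarrow> measure_pmf.expectation (Q N) (\<lambda>w. h (w n)) = (\<Sum>i\<le>J. P n i * h (x i))"
proof -
  assume n: "1 \<le> n" "n \<le> N"
  have "dep n (\<lambda>w. h (w n))" unfolding dep_def by auto
  hence "measure_pmf.expectation (Q N) (\<lambda>w. h (w n)) = measure_pmf.expectation (Q n) (\<lambda>w. h (w n))"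
    by (rule EQ_dep) (use n in simp)
  thus ?thesis using marg[OF n] by simp
qed

lemma st_mean: fixes g :: "real \<Rightarrow> real" assumes "w \<in> set_pmf (Q N)" "n < N" and that: "\<And>i. i \<le> J \<Longrightarrow> g (x i) = x i"
  shows "measure_pmf.expectation (st n (w n)) (\<lambda>v. g v) = w n"
proof -
  have "measure_pmf.expectation (st n (w n)) g = (\<Sum>m\<le>J. row n (idx (w n)) m * x m)"
    unfolding st_int using that by (intro sum.cong) auto
  also have "\<dots> = w n"
  proof (cases "n = 0")
    case True thus ?thesis using suppQ[OF assms(1)] row0_mean by simp
  next
    case False
    hence "w n \<in> x ` {..J}" using suppQ[OF assms(1)] assms(2) by simp
    then obtain i where i: "i \<le> J" "w n = x i" by blast
    thus ?thesis using row_mean[OF i(1)] False idx_x by simp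
  qed
  finally show ?thesis by simp
qed

end



lemma ce_charact:
  fixes R :: "'a pmf" and f g :: "'a \<Rightarrow> real"
  assumes fin: "finite (set_pmf R)" and sp: "space G = UNIV" and g: "g \<in> borel_measurable G"
    and eq: "\<And>A. A \<in> sets G \<Longrightarrow> measure_pmf.expectation R (\<lambda>w. indicator A w * f w) = measure_pmf.expectation R (\<lambda>w. indicator A w * g w)"
  shows "AE w in measure_pmf R. real_cond_exp (measure_pmf R) G f w = g w"
proof -
  have sub: "subalgebra (measure_pmf R) G" unfolding subalgebra_def using sp by simp
  interpret F: finite_measure_subalgebra "measure_pmf R" G
    unfolding finite_measure_subalgebra_def finite_measure_subalgebra_axioms_def
    using sub measure_pmf.finite_measure_axioms by blast
  show ?thesis
  proof (rule F.real_cond_exp_charact)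
    fix A assume A: "A \<in> sets G"
    show "(\<integral>w\<in>A. f w \<partial>measure_pmf R) = (\<integral>w\<in>A. g w \<partial>measure_pmf R)"
      unfolding set_lebesgue_integral_def using eq[OF A] by simp
  qed (use g integrable_measure_pmf_finite[OF fin] in auto)
qed

context setting
begin

definition prj :: "real \<Rightarrow> real" where "prj v = (if v \<in> x ` {..J} then v else x 0)"
definition Xp :: "nat \<Rightarrow> (nat \<Rightarrow> real) \<Rightarrow> real" where "Xp n w = (if n = 0 then s0 else prj (w n))"
definition pre :: "nat \<Rightarrow> (nat \<Rightarrow> real) \<Rightarrow> (nat \<Rightarrow> real)" where "pre n w = (\<lambda>i. if i \<le> n then w i else 0)"
definition Fn :: "nat \<Rightarrow> (nat \<Rightarrow> real) measure" where "Fn n = vimage_algebra UNIV (pre n) (count_space UNIV)"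

lemma prj_x: "i \<le> J \<Longrightarrow> prj (x i) = x i" unfolding prj_def by auto

lemma prj_range: "prj v \<in> x ` {..J}" unfolding prj_def by auto

lemma Xp_range: "Xp n w \<in> insert s0 (x ` {..J})" unfolding Xp_def using prj_range by auto

lemma Xp_supp: assumes "w \<in> set_pmf (Q N)" "n \<le> N" shows "Xp n w = w n"
proof (cases "n = 0")
  case True thus ?thesis using suppQ[OF assms(1)] unfolding Xp_def by simp
next
  case False
  hence "w n \<in> x ` {..J}" using suppQ[OF assms(1)] assms(2) by simp
  thus ?thesis using False unfolding Xp_def prj_def by simp
qed

lemma sets_Fn: "A \<in> sets (Fn n) \<Longrightarrow> \<exists>B. A = pre n -` B"
  unfolding Fn_def by (subst (asm) sets_vimage_algebra2) auto

lemma dep_Fn: "A \<in> sets (Fn n) \<Longrightarrow> dep n (indicator A :: _ \<Rightarrow> real)"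
proof -
  assume "A \<in> sets (Fn n)"
  then obtain B where B: "A = pre n -` B" using sets_Fn by blast
  show ?thesis unfolding dep_def
  proof (intro allI impI)
    fix w w' :: "nat \<Rightarrow> real" assume "\<forall>i\<le>n. w i = w' i"
    hence "pre n w = pre n w'" unfolding pre_def by auto
    thus "indicator A w = (indicator A w' :: real)" unfolding B by (simp add: indicator_def)
  qed
qed

lemma dep_Xp: "A \<in> sets (vimage_algebra UNIV (Xp n) borel) \<Longrightarrow> dep n (indicator A :: _ \<Rightarrow> real)"
proof -
  assume "A \<in> sets (vimage_algebra UNIV (Xp n) borel)"
  then obtain B where B: "A = Xp n -` B \<inter> UNIV" by (subst (asm) sets_vimage_algebra2) auto
  show ?thesis unfolding dep_def
  proof (intro allI impI)
    fix w w' :: "nat \<Rightarrow> real" assume "\<forall>i\<le>n. w i = w' i"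
    hence "Xp n w = Xp n w'" unfolding Xp_def by auto
    thus "indicator A w = (indicator A w' :: real)" unfolding B by (simp add: indicator_def)
  qed
qed

lemma Xp_meas_Fn: "Xp n \<in> borel_measurable (Fn n)"
proof -
  have p: "pre n \<in> measurable (Fn n) (count_space UNIV)"
    unfolding Fn_def by (rule measurable_vimage_algebra1) simp
  have q: "Xp n \<in> measurable (count_space UNIV) borel" by simp
  have "Xp n \<circ> pre n \<in> borel_measurable (Fn n)" by (rule measurable_comp[OF p q])
  moreover have "Xp n \<circ> pre n = Xp n" unfolding Xp_def pre_def by (rule ext) simp
  ultimately show ?thesis by simp
qed

lemma Xp_meas_X: "Xp n \<in> borel_measurable (vimage_algebra UNIV (Xp n) borel)"
  by (rule measurable_vimage_algebra1) simp

lemma Fn_mono: "n \<le> m \<Longrightarrow> sets (Fn n) \<subseteq> sets (Fn m)"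
proof
  fix A assume nm: "n \<le> m" and A: "A \<in> sets (Fn n)"
  then obtain B where B: "A = pre n -` B" using sets_Fn by blast
  have pp: "pre n (pre m w) = pre n w" for w using nm unfolding pre_def by (intro ext) auto
  have "A = pre m -` (pre n -` B) \<inter> UNIV" unfolding B by (auto simp: pp)
  moreover have "pre m -` (pre n -` B) \<inter> UNIV \<in> sets (Fn m)"
    unfolding Fn_def by (rule in_vimage_algebra) simp
  ultimately show "A \<in> sets (Fn m)" by simp
qed

lemma intM: "integrable (measure_pmf (Q N)) (f :: _ \<Rightarrow> real)"
  by (rule integrable_measure_pmf_finite[OF finQ])

lemma cond_step:
  fixes \<psi> :: "(nat \<Rightarrow> real) \<Rightarrow> real" and f :: "real \<Rightarrow> real"
  assumes n: "n < N" and d: "dep n \<psi>"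
  shows "measure_pmf.expectation (Q N) (\<lambda>w. \<psi> w * f (w (Suc n))) =
         measure_pmf.expectation (Q N) (\<lambda>w. \<psi> w * measure_pmf.expectation (st n (Xp n w)) f)"
proof -
  have "measure_pmf.expectation (Q N) (\<lambda>w. \<psi> w * f (w (Suc n))) =
         measure_pmf.expectation (Q N) (\<lambda>w. \<psi> w * measure_pmf.expectation (st n (w n)) f)"
    by (rule keyb[OF n d])
  also have "\<dots> = measure_pmf.expectation (Q N) (\<lambda>w. \<psi> w * measure_pmf.expectation (st n (Xp n w)) f)"
  proof (rule integral_cong_AE)
    show "AE w in measure_pmf (Q N). \<psi> w * measure_pmf.expectation (st n (w n)) f =
             \<psi> w * measure_pmf.expectation (st n (Xp n w)) f"
      unfolding AE_measure_pmf_iff using Xp_supp n by simp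
  qed simp_all
  finally show ?thesis .
qed

lemma mart_step: assumes n: "n < N" and d: "dep n \<psi>"
  shows "measure_pmf.expectation (Q N) (\<lambda>w. \<psi> w * Xp (Suc n) w) =
         measure_pmf.expectation (Q N) (\<lambda>w. \<psi> w * Xp n w)"
proof -
  have "measure_pmf.expectation (Q N) (\<lambda>w. \<psi> w * Xp (Suc n) w) =
        measure_pmf.expectation (Q N) (\<lambda>w. \<psi> w * prj (w (Suc n)))"
    unfolding Xp_def by simp
  also have "\<dots> = measure_pmf.expectation (Q N) (\<lambda>w. \<psi> w * measure_pmf.expectation (st n (w n)) prj)"
    by (rule keyb[OF n d])
  also have "\<dots> = measure_pmf.expectation (Q N) (\<lambda>w. \<psi> w * Xp n w)"
  proof (rule integral_cong_AE)
    show "AE w in measure_pmf (Q N). \<psi> w * measure_pmf.expectation (st n (w n)) prj = \<psi> w * Xp n w"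
      unfolding AE_measure_pmf_iff
    proof
      fix w assume w: "w \<in> set_pmf (Q N)"
      have "measure_pmf.expectation (st n (w n)) prj = w n"
        by (rule st_mean[OF w n]) (simp add: prj_x)
      thus "\<psi> w * measure_pmf.expectation (st n (w n)) prj = \<psi> w * Xp n w"
        using Xp_supp[OF w] n by simp
    qed
  qed simp_all
  finally show ?thesis .
qed


lemma marg_meas: assumes n: "n \<in> {1..N}" and j: "j \<le> J"
  shows "measure (measure_pmf (Q N)) {w \<in> space (measure_pmf (Q N)). Xp n w = x j} = pmarg J x c j n"
proof -
  have n1: "1 \<le> n" "n \<le> N" "n \<noteq> 0" using n by auto
  have "measure (measure_pmf (Q N)) {w \<in> space (measure_pmf (Q N)). Xp n w = x j}
      = measure_pmf.expectation (Q N) (indicator {w \<in> space (measure_pmf (Q N)). Xp n w = x j})"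
    by simp
  also have "\<dots> = measure_pmf.expectation (Q N) (\<lambda>w. (\<lambda>v. indicator {x j} (prj v)) (w n))"
    by (rule Bochner_Integration.integral_cong) (auto simp: Xp_def n1 indicator_def)
  also have "\<dots> = (\<Sum>i\<le>J. P n i * indicator {x j} (prj (x i)))"
    by (rule margN[OF n1(1,2)])
  also have "\<dots> = (\<Sum>i\<le>J. if i = j then P n i else 0)"
  proof (rule sum.cong)
    fix i assume i: "i \<in> {..J}"
    have "(x i = x j) = (i = j)" using xinj[of i j] i j by auto
    thus "P n i * indicator {x j} (prj (x i)) = (if i = j then P n i else 0)"
      using i by (simp add: prj_x indicator_def)
  qed simp
  also have "\<dots> = P n j" using j by simp
  finally show ?thesis unfolding P_def .
qed

lemma model: "is_markov_model N J s0 x c (measure_pmf (Q N)) Fn Xp"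
proof -
  let ?M = "measure_pmf (Q N)"
  have sub: "subalgebra ?M (Fn n)" for n unfolding subalgebra_def Fn_def by simp
  have mart: "AE w in ?M. real_cond_exp ?M (Fn n) (Xp (n+1)) w = Xp n w" if n: "n < N" for n
  proof (rule ce_charact[OF finQ])
    show "space (Fn n) = UNIV" unfolding Fn_def by simp
    show "Xp n \<in> borel_measurable (Fn n)" by (rule Xp_meas_Fn)
    fix A assume "A \<in> sets (Fn n)"
    hence d: "dep n (indicator A :: _ \<Rightarrow> real)" by (rule dep_Fn)
    show "measure_pmf.expectation (Q N) (\<lambda>w. indicator A w * Xp (n+1) w) =
          measure_pmf.expectation (Q N) (\<lambda>w. indicator A w * Xp n w)"
      using mart_step[OF n d] by simp
  qed
  have markov: "AE w in ?M. real_cond_exp ?M G (indicator {w \<in> space ?M. Xp (n+1) w = x k}) w =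
         measure_pmf.expectation (st n (Xp n w)) (\<lambda>u. indicator {x k} (prj u) :: real)"
    if n: "n < N" and G: "space G = UNIV" "Xp n \<in> borel_measurable G"
      "\<And>A. A \<in> sets G \<Longrightarrow> dep n (indicator A :: _ \<Rightarrow> real)" for n k G
  proof (rule ce_charact[OF finQ G(1)])
    show "(\<lambda>w. measure_pmf.expectation (st n (Xp n w)) (\<lambda>u. indicator {x k} (prj u) :: real)) \<in> borel_measurable G"
    proof -
      define hh :: "real \<Rightarrow> real" where "hh v = measure_pmf.expectation (st n v) (\<lambda>u. indicator {x k} (prj u) :: real)" for v
      have "(\<lambda>w. hh (Xp n w)) \<in> borel_measurable G"
        by (rule fin_comp_meas[OF G(2), of "insert s0 (x ` {..J})"]) (use Xp_range in blast)+
      thus ?thesis unfolding hh_def .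
    qed
    fix A assume "A \<in> sets G"
    hence d: "dep n (indicator A :: _ \<Rightarrow> real)" by (rule G(3))
    have "measure_pmf.expectation (Q N) (\<lambda>w. indicator A w * indicator {w \<in> space ?M. Xp (n+1) w = x k} w)
        = measure_pmf.expectation (Q N) (\<lambda>w. indicator A w * (\<lambda>u. indicator {x k} (prj u) :: real) (w (Suc n)))"
      by (rule Bochner_Integration.integral_cong) (auto simp: Xp_def indicator_def)
    also have "\<dots> = measure_pmf.expectation (Q N) (\<lambda>w. indicator A w * measure_pmf.expectation (st n (Xp n w)) (\<lambda>u. indicator {x k} (prj u) :: real))"
      by (rule cond_step[OF n d])
    finally show "measure_pmf.expectation (Q N) (\<lambda>w. indicator A w * indicator {w \<in> space ?M. Xp (n+1) w = x k} w)
        = measure_pmf.expectation (Q N) (\<lambda>w. indicator A w * measure_pmf.expectation (st n (Xp n w)) (\<lambda>u. indicator {x k} (prj u) :: real))" .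
  qed
  show ?thesis
    unfolding is_markov_model_def is_model_def
  proof (intro conjI allI impI ballI)
    show "prob_space ?M" by (rule prob_space_measure_pmf)
    fix n assume "n \<le> N" show "subalgebra ?M (Fn n)" by (rule sub)
  next
    fix n m :: nat assume "n \<le> m \<and> m \<le> N" thus "sets (Fn n) \<subseteq> sets (Fn m)" using Fn_mono by simp
  next
    fix n assume "n \<le> N" show "Xp n \<in> borel_measurable (Fn n)" by (rule Xp_meas_Fn)
  next
    fix n assume "n \<le> N" show "integrable ?M (Xp n)" by (rule intM)
  next
    fix w show "Xp 0 w = s0" unfolding Xp_def by simp
  next
    fix n w assume "n \<in> {1..N}"
    thus "Xp n w \<in> x ` {0..J}" unfolding Xp_def using prj_range by (auto simp: atMost_atLeast0)
  next
    fix n j assume "n \<in> {1..N}" "j \<le> J"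
    thus "measure ?M {w \<in> space ?M. Xp n w = x j} = pmarg J x c j n" by (rule marg_meas)
  next
    fix n assume "n < N" thus "AE w in ?M. real_cond_exp ?M (Fn n) (Xp (n+1)) w = Xp n w" by (rule mart)
  next
    fix n k assume n: "n < N" and k: "k \<le> J"
    have a: "AE w in ?M. real_cond_exp ?M (Fn n) (indicator {w \<in> space ?M. Xp (n+1) w = x k}) w =
         measure_pmf.expectation (st n (Xp n w)) (\<lambda>u. indicator {x k} (prj u) :: real)"
    proof (rule markov[OF n])
      show "space (Fn n) = UNIV" unfolding Fn_def by simp
      show "Xp n \<in> borel_measurable (Fn n)" by (rule Xp_meas_Fn)
      show "\<And>A. A \<in> sets (Fn n) \<Longrightarrow> dep n (indicator A :: _ \<Rightarrow> real)" by (rule dep_Fn)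
    qed
    have b: "AE w in ?M. real_cond_exp ?M (vimage_algebra (space ?M) (Xp n) borel) (indicator {w \<in> space ?M. Xp (n+1) w = x k}) w =
         measure_pmf.expectation (st n (Xp n w)) (\<lambda>u. indicator {x k} (prj u) :: real)"
      by (rule markov[OF n]) (auto intro: Xp_meas_X dep_Xp)
    show "AE w in ?M. real_cond_exp ?M (Fn n) (indicator {w \<in> space ?M. Xp (n+1) w = x k}) w =
        real_cond_exp ?M (vimage_algebra (space ?M) (Xp n) borel) (indicator {w \<in> space ?M. Xp (n+1) w = x k}) w"
      using a b by eventually_elim simp
  qed
qed

lemma arb: "arbitrage_free N J s0 x c"
  unfolding arbitrage_free_def
proof
  assume "\<exists>lam Delta. nonanticipative Delta \<and> (\<forall>w. is_path N J s0 x w \<longrightarrow> gain N J x c lam Delta w > 0)"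
  then obtain lam Delta where na: "nonanticipative Delta"
    and pos: "\<And>w. is_path N J s0 x w \<Longrightarrow> gain N J x c lam Delta w > 0" by blast
  let ?E = "measure_pmf.expectation (Q N)"
  have "0 < ?E (gain N J x c lam Delta)"
  proof (rule pos_expectation[OF finQ])
    fix w assume w: "w \<in> set_pmf (Q N)"
    have "is_path N J s0 x w" unfolding is_path_def using suppQ[OF w] by (auto simp: atMost_atLeast0)
    thus "0 < gain N J x c lam Delta w" by (rule pos)
  qed
  moreover have "?E (gain N J x c lam Delta) = 0"
  proof -
    have t1: "?E (\<lambda>w. lam j n * (max (w n - x j) 0 - c j n)) = 0" if n: "n \<in> {1..N}" and j: "j \<in> {0..J}" for n j
    proof -
      have "?E (\<lambda>w. lam j n * (max (w n - x j) 0 - c j n)) = lam j n * (?E (\<lambda>w. max (w n - x j) 0) - c j n)"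
        by (simp add: intM)
      also have "?E (\<lambda>w. max (w n - x j) 0) = (\<Sum>i\<le>J. P n i * max (x i - x j) 0)"
        using n by (intro margN) auto
      also have "\<dots> = c j n" using Pcall[OF n, of j] j by simp
      finally show ?thesis by simp
    qed
    have t2: "?E (\<lambda>w. Delta n w * (w (n+1) - w n)) = 0" if n: "n < N" for n
    proof -
      have d: "dep n (Delta n)" using na unfolding nonanticipative_def dep_def by blast
      have "?E (\<lambda>w. Delta n w * (w (n+1) - w n)) = ?E (\<lambda>w. Delta n w * w (Suc n)) - ?E (\<lambda>w. Delta n w * w n)"
        by (simp add: intM right_diff_distrib)
      also have "?E (\<lambda>w. Delta n w * w (Suc n)) = ?E (\<lambda>w. Delta n w * measure_pmf.expectation (st n (w n)) (\<lambda>v. v))"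
        by (rule keyb[OF n d])
      also have "\<dots> = ?E (\<lambda>w. Delta n w * w n)"
      proof (rule integral_cong_AE)
        show "AE w in measure_pmf (Q N). Delta n w * measure_pmf.expectation (st n (w n)) (\<lambda>v. v) = Delta n w * w n"
          unfolding AE_measure_pmf_iff using st_mean[OF _ n, of _ "\<lambda>v. v"] by simp
      qed simp_all
      finally show ?thesis by simp
    qed
    have "?E (gain N J x c lam Delta) =
      (\<Sum>n\<in>{1..N}. \<Sum>j\<in>{0..J}. ?E (\<lambda>w. lam j n * (max (w n - x j) 0 - c j n)))
      + (\<Sum>n<N. ?E (\<lambda>w. Delta n w * (w (n+1) - w n)))"
      unfolding gain_def by (simp add: intM)
    also have "\<dots> = 0"
    proof -
      have "(\<Sum>n\<in>{1..N}. \<Sum>j\<in>{0..J}. ?E (\<lambda>w. lam j n * (max (w n - x j) 0 - c j n))) = 0"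
      proof (rule sum.neutral, rule ballI)
        fix n assume n: "n \<in> {1..N}"
        show "(\<Sum>j\<in>{0..J}. ?E (\<lambda>w. lam j n * (max (w n - x j) 0 - c j n))) = 0"
          by (rule sum.neutral, rule ballI, rule t1[OF n])
      qed
      moreover have "(\<Sum>n<N. ?E (\<lambda>w. Delta n w * (w (n+1) - w n))) = 0"
        by (rule sum.neutral, rule ballI, rule t2) simp
      ultimately show ?thesis by simp
    qed
    finally show ?thesis .
  qed
  ultimately show False by simp
qed

end

theorem mainTheorem2:
  fixes N J :: nat and t :: "nat \<Rightarrow> real" and s0 :: real
    and x :: "nat \<Rightarrow> real" and c :: "nat \<Rightarrow> nat \<Rightarrow> real"
  assumes "N \<ge> 1" and "J \<ge> 1"
    and "t 0 = 0" and "\<forall>n<N. t n < t (n+1)"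
    and "s0 > 0"
    and "x 0 = 0" and "\<forall>j<J. x j < x (j+1)"
    and "conds_C N J s0 x c"
  shows "(\<exists>(M :: (nat \<Rightarrow> real) measure) F X. is_markov_model N J s0 x c M F X)
         \<and> arbitrage_free N J s0 x c"
proof -
  interpret setting N J s0 x c
    using assms by unfold_locales auto
  show ?thesis using model arb by blast
qed



end
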